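(* Let $n$ and $k$ be integers with $2 \le k < n$. Then the $(n,k)$ batch mix is stable, i.e., its state process $L(t)$ is positive recurrent (equivalently, it admits an invariant probability measure).
   Context: An $(n,k)$ batch mix (with integers $n \ge 2$, $2 \le k \le n$) is a system of $n$ first-in first-out queues with infinite buffers, where queue $i$ receives messages from its own sender according to a Poisson process of rate $\lambda>0$, the $n$ arrival processes being independent. Messages are held (blocked) as long as fewer than $k$ queues are non-empty; as soon as $k$ queues become non-empty (which happens at an arrival instant, the arriving message counting as present), one message is removed from the head of each of these $k$ non-empty queues and dispatched instantly. Hence at any time at most $k-1$ queues are non-empty. No transmission or reception delays are modeled. The state of the system is the continuous-time Markov process $L(t) = (l_1(t), \dots, l_{k-1}(t))$, where $l_i(t)$ is the length of the $i$-th longest queue at time $t$. Stability means existence of an invariant probability measure for $L(t)$. *)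

theory Defs
  imports "HOL-Analysis.Analysis"
begin

text \<open>States of the (n,k) batch mix: the vector (l_1,...,l_{k-1}) of the k-1 longest
  queue lengths, in non-increasing order (the remaining n-k+1 queues are empty).\<close>
definition batch_states :: "nat \<Rightarrow> nat list set" where
  "batch_states k = {xs. length xs = k - 1 \<and> sorted_wrt (\<ge>) xs}"

text \<open>Effect of an arrival to queue j (j < n) in state xs: queues 0..k-2 carry the lengths
  in xs, queues k-1..n-1 are empty.\<close>
definition batch_step :: "nat \<Rightarrow> nat \<Rightarrow> nat list \<Rightarrow> nat \<Rightarrow> nat list" where
  "batch_step n k xs j =
     (let ys = xs @ replicate (n - length xs) 0;
          ys' = ys[j := ys ! j + 1];
          ys'' = (if length (filter (\<lambda>x. x \<noteq> 0) ys') = k then map (\<lambda>x. x - 1) ys' else ys')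
      in take (k - 1) (rev (sort ys'')))"

text \<open>Generator (Q-matrix) of the continuous-time Markov chain L(t): every queue receives
  messages at rate lambda, so the rate from s to s' is lambda times the number of queues
  whose arrival leads from s to s'; the diagonal entry is minus the total rate n*lambda.\<close>
definition batch_generator :: "nat \<Rightarrow> nat \<Rightarrow> real \<Rightarrow> nat list \<Rightarrow> nat list \<Rightarrow> real" where
  "batch_generator n k lam s s' =
     lam * real (card {j. j < n \<and> batch_step n k s j = s'}) - (if s = s' then real n * lam else 0)"

definition ctmc_invariant_prob :: "'s set \<Rightarrow> ('s \<Rightarrow> 's \<Rightarrow> real) \<Rightarrow> ('s \<Rightarrow> real) \<Rightarrow> bool" where
  "ctmc_invariant_prob S Q p \<longleftrightarrow>
     (\<forall>s\<in>S. p s \<ge> 0) \<and> (p has_sum 1) S \<and>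
     (\<forall>s'\<in>S. ((\<lambda>s. p s * Q s s') has_sum 0) S)"

definition batch_mix_stable :: "nat \<Rightarrow> nat \<Rightarrow> real \<Rightarrow> bool" where
  "batch_mix_stable n k lam \<longleftrightarrow>
     (\<exists>p. ctmc_invariant_prob (batch_states k) (batch_generator n k lam) p)"

end

theory Submission
  imports Defs
begin


definition Nz :: "nat list \<Rightarrow> real" where "Nz xs = sum_list (map (\<lambda>x. if x = 0 then 0 else 1) xs)"
definition Tr :: "nat list \<Rightarrow> real" where "Tr xs = sum_list (map real xs)"
definition Qr :: "nat list \<Rightarrow> real" where "Qr xs = sum_list (map (\<lambda>x. real x ^ 2) xs)"
definition On :: "nat list \<Rightarrow> real" where "On xs = sum_list (map (\<lambda>x. if x = 1 then 1 else 0) xs)"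

lemma len_filter_Nz: "real (length (filter (\<lambda>x. x \<noteq> 0) xs)) = Nz xs"
  by (induction xs) (auto simp: Nz_def)

lemma sum_list_map_update:
  fixes g :: "nat \<Rightarrow> real"
  assumes "j < length xs"
  shows "sum_list (map g (xs[j := v])) = sum_list (map g xs) + g v - g (xs ! j)"
  using assms
proof (induction xs arbitrary: j)
  case Nil then show ?case by simp
next
  case (Cons a xs) then show ?case by (cases j) auto
qed

lemma sum_list_zero_map: "(\<And>x. x \<in> set xs \<Longrightarrow> (g::nat\<Rightarrow>real) x = 0) \<Longrightarrow> sum_list (map g xs) = 0"
  by (induction xs) auto

lemma sum_list_perm_map:
  fixes g :: "'a \<Rightarrow> 'b::comm_monoid_add"
  assumes "mset xs = mset ys"
  shows "sum_list (map g xs) = sum_list (map g ys)"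
proof -
  have "sum_list (map g xs) = sum_mset (mset (map g xs))" by (rule sum_mset_sum_list[symmetric])
  also have "\<dots> = sum_mset (mset (map g ys))" by (simp add: assms)
  also have "\<dots> = sum_list (map g ys)" by (rule sum_mset_sum_list)
  finally show ?thesis .
qed

lemma take_sort_sum:
  fixes g :: "nat \<Rightarrow> real"
  assumes g0: "g 0 = 0" and nz: "length (filter (\<lambda>x. x \<noteq> 0) zs) \<le> r"
  shows "sum_list (map g (take r (rev (sort zs)))) = sum_list (map g zs)"
proof -
  define ws where "ws = rev (sort zs)"
  have ms: "mset ws = mset zs" by (simp add: ws_def)
  have sw: "sorted_wrt (\<ge>) ws" by (simp add: ws_def sorted_wrt_rev)
  have nzw: "length (filter (\<lambda>x. x \<noteq> 0) ws) \<le> r"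
  proof -
    have "length (filter (\<lambda>x. x \<noteq> 0) ws) = size (mset (filter (\<lambda>x. x \<noteq> 0) ws))" by (rule size_mset[symmetric])
    also have "\<dots> = size (mset (filter (\<lambda>x. x \<noteq> 0) zs))" by (simp add: ms)
    also have "\<dots> = length (filter (\<lambda>x. x \<noteq> 0) zs)" by (rule size_mset)
    finally show ?thesis using nz by simp
  qed
  have z: "x = 0" if "x \<in> set (drop r ws)" for x
  proof (rule ccontr)
    assume x0: "x \<noteq> 0"
    have "\<exists>i. i < length ws \<and> r \<le> i \<and> ws ! i = x"
    proof -
      from that obtain i0 where "i0 < length ws - r" "x = ws ! (r + i0)" by (auto simp: in_set_conv_nth)
      then show ?thesis using that by (intro exI[of _ "r + i0"]) auto
    qed
    then obtain i where i: "i < length ws" "r \<le> i" "ws ! i = x" by blast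
    have "{0..i} \<subseteq> {i'. i' < length ws \<and> ws ! i' \<noteq> 0}"
    proof
      fix i' assume "i' \<in> {0..i}"
      then have "i' \<le> i" by simp
      then have "ws ! i' \<ge> ws ! i"
        using sorted_wrt_nth_less[OF sw, of i' i] i by (cases "i' = i") auto
      then show "i' \<in> {i'. i' < length ws \<and> ws ! i' \<noteq> 0}" using x0 i \<open>i' \<le> i\<close> by auto
    qed
    then have "card {0..i} \<le> card {i'. i' < length ws \<and> ws ! i' \<noteq> 0}"
      by (intro card_mono) auto
    then have "Suc i \<le> length (filter (\<lambda>x. x \<noteq> 0) ws)"
      by (simp add: length_filter_conv_card)
    then show False using nzw i by simp
  qed
  have "sum_list (map g (drop r ws)) = 0"
    by (rule sum_list_zero_map) (use z g0 in blast)
  moreover have "sum_list (map g ws) = sum_list (map g (take r ws)) + sum_list (map g (drop r ws))"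
  proof -
    have "sum_list (map g ws) = sum_list (map g (take r ws @ drop r ws))" by simp
    also have "\<dots> = sum_list (map g (take r ws)) + sum_list (map g (drop r ws))"
      by (simp only: map_append sum_list_append)
    finally show ?thesis .
  qed
  moreover have "sum_list (map g ws) = sum_list (map g zs)" by (rule sum_list_perm_map[OF ms])
  ultimately show ?thesis by (simp add: ws_def)
qed

lemma real_minus1: "real (x - 1) = (if x = 0 then 0 else real x - 1)"
  by (cases x) auto

lemma sum_minus1:
  "sum_list (map (\<lambda>x. real (x - 1)) xs) = Tr xs - Nz xs"
  "sum_list (map (\<lambda>x. real (x - 1) ^ 2) xs) = Qr xs - 2 * Tr xs + Nz xs"
  "Nz (map (\<lambda>x. x - 1) xs) = Nz xs - On xs"
  by (induction xs) (simp_all add: Tr_def Nz_def Qr_def On_def real_minus1 power2_eq_square algebra_simps)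




lemma Nz_le: "Nz xs \<le> real (length xs)" "0 \<le> Nz xs"
  by (induction xs) (auto simp: Nz_def)
lemma On_ge: "0 \<le> On xs" by (induction xs) (auto simp: On_def)
lemma Tr_ge: "0 \<le> Tr xs" by (induction xs) (auto simp: Tr_def)

lemma sorted_wrt_take': "sorted_wrt P xs \<Longrightarrow> sorted_wrt P (take m xs)"
  using sorted_wrt_append[of P "take m xs" "drop m xs"] by simp

lemma pad_sums:
  shows "Tr (s @ replicate m 0) = Tr s" "Qr (s @ replicate m 0) = Qr s"
    "Nz (s @ replicate m 0) = Nz s" "On (s @ replicate m 0) = On s"
  by (induction m) (auto simp: Tr_def Qr_def Nz_def On_def replicate_append_same[symmetric] simp del: replicate_append_same)

locale bm =
  fixes n k :: nat
  assumes k2: "2 \<le> k" and kn: "k < n"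
begin

definition ys_of :: "nat list \<Rightarrow> nat list" where
  "ys_of s = s @ replicate (n - length s) 0"

lemma step_props:
  assumes s: "s \<in> batch_states k" and j: "j < n"
  defines "y \<equiv> real (ys_of s ! j)"
  shows "batch_step n k s j \<in> batch_states k"
    and "Nz s = real k - 1 \<and> y = 0 \<Longrightarrow>
           Tr (batch_step n k s j) = Tr s + 1 - real k \<and> Qr (batch_step n k s j) = Qr s - 2 * Tr s + real k - 1"
    and "\<not> (Nz s = real k - 1 \<and> y = 0) \<Longrightarrow>
           Tr (batch_step n k s j) = Tr s + 1 \<and> Qr (batch_step n k s j) = Qr s + 2 * y + 1"
proof -
  have ls: "length s = k - 1" using s by (simp add: batch_states_def)
  define ys where "ys = ys_of s"
  define ys1 where "ys1 = ys[j := ys ! j + 1]"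
  define ys2 where "ys2 = (if length (filter (\<lambda>x. x \<noteq> 0) ys1) = k then map (\<lambda>x. x - 1) ys1 else ys1)"
  have r: "batch_step n k s j = take (k - 1) (rev (sort ys2))"
    by (simp add: batch_step_def Let_def ys_def ys1_def ys2_def ys_of_def)
  have lys: "length ys = n" using ls kn by (simp add: ys_def ys_of_def)
  have jl: "j < length ys" using lys j by simp
  have yj: "y = real (ys ! j)" by (simp add: y_def ys_def)
  have sys: "Tr ys = Tr s" "Qr ys = Qr s" "Nz ys = Nz s" "On ys = On s"
    by (simp_all add: ys_def ys_of_def pad_sums)
  have nzs: "Nz s \<le> real k - 1" using Nz_le(1)[of s] ls k2 by simp
  have T1: "Tr ys1 = Tr s + 1"
    using sum_list_map_update[OF jl, of real] sys by (simp add: ys1_def Tr_def)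
  have Q1: "Qr ys1 = Qr s + 2 * y + 1"
  proof -
    have "Qr ys1 = Qr ys + real (ys ! j + 1) ^ 2 - real (ys ! j) ^ 2"
      using sum_list_map_update[OF jl, of "\<lambda>x. real x ^ 2" "ys ! j + 1"] by (simp add: ys1_def Qr_def)
    then show ?thesis using sys yj by (simp add: power2_eq_square algebra_simps)
  qed
  have N1: "Nz ys1 = Nz s + (if y = 0 then 1 else 0)"
    using sum_list_map_update[OF jl, of "\<lambda>x. if x = 0 then 0 else 1"] sys yj
    by (simp add: ys1_def Nz_def)
  have O1: "On ys1 \<ge> 1" if "y = 0"
    using sum_list_map_update[OF jl, of "\<lambda>x. if x = 1 then 1 else 0"] sys yj that On_ge[of s]
    by (simp add: ys1_def On_def)
  have D: "(length (filter (\<lambda>x. x \<noteq> 0) ys1) = k) \<longleftrightarrow> (Nz s = real k - 1 \<and> y = 0)"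
  proof -
    have "(length (filter (\<lambda>x. x \<noteq> 0) ys1) = k) \<longleftrightarrow> Nz ys1 = real k"
      using len_filter_Nz[of ys1] by (metis of_nat_eq_iff)
    then show ?thesis using N1 nzs by auto
  qed
  have l2: "length ys2 = n" using lys by (simp add: ys2_def ys1_def)
  have nz2: "length (filter (\<lambda>x. x \<noteq> 0) ys2) \<le> k - 1"
  proof (cases "Nz s = real k - 1 \<and> y = 0")
    case True
    then have "ys2 = map (\<lambda>x. x - 1) ys1" unfolding ys2_def using D by auto
    then have "Nz ys2 = Nz ys1 - On ys1" using sum_minus1(3)[of ys1] by simp
    then have "Nz ys2 \<le> real k - 1" using N1 True O1 by simp
    then show ?thesis using len_filter_Nz[of ys2] k2 by simp
  next
    case False
    then have e: "ys2 = ys1" unfolding ys2_def using D by auto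
    have "real (length (filter (\<lambda>x. x \<noteq> 0) ys1)) \<le> real k" using len_filter_Nz[of ys1] N1 nzs by simp
    then have "length (filter (\<lambda>x. x \<noteq> 0) ys1) \<le> k" by simp
    moreover have "length (filter (\<lambda>x. x \<noteq> 0) ys1) \<noteq> k" using D False by simp
    ultimately show ?thesis using e by simp
  qed
  have TR: "Tr (batch_step n k s j) = Tr ys2" "Qr (batch_step n k s j) = Qr ys2"
    unfolding r Tr_def Qr_def by (rule take_sort_sum[OF _ nz2]; simp)+
  show "batch_step n k s j \<in> batch_states k"
    unfolding r batch_states_def using l2 kn
    by (auto intro!: sorted_wrt_take' simp: sorted_wrt_rev)
  show "Nz s = real k - 1 \<and> y = 0 \<Longrightarrow>
           Tr (batch_step n k s j) = Tr s + 1 - real k \<and> Qr (batch_step n k s j) = Qr s - 2 * Tr s + real k - 1"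
  proof -
    assume a: "Nz s = real k - 1 \<and> y = 0"
    then have "ys2 = map (\<lambda>x. x - 1) ys1" unfolding ys2_def using D by auto
    then have "Tr ys2 = Tr ys1 - Nz ys1" "Qr ys2 = Qr ys1 - 2 * Tr ys1 + Nz ys1"
      using sum_minus1(1,2)[of ys1] by (simp_all add: Tr_def Qr_def o_def)
    then show ?thesis using TR T1 Q1 N1 a by simp
  qed
  show "\<not> (Nz s = real k - 1 \<and> y = 0) \<Longrightarrow>
           Tr (batch_step n k s j) = Tr s + 1 \<and> Qr (batch_step n k s j) = Qr s + 2 * y + 1"
  proof -
    assume a: "\<not> (Nz s = real k - 1 \<and> y = 0)"
    then have "ys2 = ys1" unfolding ys2_def using D by auto
    then show ?thesis using TR T1 Q1 by simp
  qed
qed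

end



lemma Qr_ge: "0 \<le> Qr xs" by (induction xs) (auto simp: Qr_def)

lemma CS: "Tr xs ^ 2 \<le> real (length xs) * Qr xs"
proof -
  have t: "Tr xs = (\<Sum>i<length xs. real (xs ! i))"
    unfolding Tr_def sum_list_sum_nth by (simp add: atLeast0LessThan)
  have q: "Qr xs = (\<Sum>i<length xs. real (xs ! i) ^ 2)"
    unfolding Qr_def sum_list_sum_nth by (simp add: atLeast0LessThan)
  show ?thesis
    using Cauchy_Schwarz_ineq_sum[of "\<lambda>i. real (xs ! i)" "\<lambda>_. 1" "{..<length xs}"]
    by (simp add: t q mult.commute)
qed

context bm begin

definition aa :: real where "aa = real n + real k - 1"
definition V :: "nat list \<Rightarrow> real" where "V s = aa * Qr s - 2 * Tr s ^ 2"
definition CC :: real where "CC = aa * ((real k - 1) * (real n - real k + 2) + real n)"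

lemma len_ys: "s \<in> batch_states k \<Longrightarrow> length (ys_of s) = n"
  using kn by (simp add: ys_of_def batch_states_def)

lemma sum_y: assumes "s \<in> batch_states k"
  shows "(\<Sum>j<n. real (ys_of s ! j)) = Tr s"
    "(\<Sum>j<n. (if real (ys_of s ! j) = 0 then 1 else 0)) = real n - Nz s"
proof -
  have l: "length (ys_of s) = n" using len_ys[OF assms] .
  have "Tr s = Tr (ys_of s)" by (simp add: ys_of_def pad_sums)
  also have "\<dots> = (\<Sum>j<n. real (ys_of s ! j))"
    unfolding Tr_def sum_list_sum_nth using l by (simp add: atLeast0LessThan)
  finally show "(\<Sum>j<n. real (ys_of s ! j)) = Tr s" by simp
  have "Nz s = Nz (ys_of s)" by (simp add: ys_of_def pad_sums)
  also have "\<dots> = (\<Sum>j<n. (if ys_of s ! j = 0 then 0 else 1))"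
    unfolding Nz_def sum_list_sum_nth using l by (simp add: atLeast0LessThan)
  also have "\<dots> = (\<Sum>j<n. 1 - (if real (ys_of s ! j) = 0 then 1 else 0))"
    by (rule sum.cong) auto
  also have "\<dots> = real n - (\<Sum>j<n. (if real (ys_of s ! j) = 0 then 1 else 0))"
    by (simp add: sum_subtractf)
  finally show "(\<Sum>j<n. (if real (ys_of s ! j) = 0 then 1 else 0)) = real n - Nz s" by simp
qed

lemma drift:
  assumes s: "s \<in> batch_states k"
  shows "(\<Sum>j<n. V (batch_step n k s j)) \<le> real n * V s - 2 * Tr s + CC"
proof -
  define T where "T = Tr s"
  define Q where "Q = Qr s"
  define y where "y j = real (ys_of s ! j)" for j
  define D where "D = (Nz s = real k - 1)"
  define B where "B = aa * (Q + 1) - 2 * (T + 1) ^ 2"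
  define A0 where "A0 = aa * (Q - 2 * T + real k - 1) - 2 * (T + 1 - real k) ^ 2"
  have T0: "T \<ge> 0" by (simp add: T_def Tr_ge)
  have each: "V (batch_step n k s j) = (if D \<and> y j = 0 then A0 else B) + 2 * aa * y j" if j: "j < n" for j
  proof (cases "D \<and> y j = 0")
    case True
    have h: "Tr (batch_step n k s j) = T + 1 - real k" "Qr (batch_step n k s j) = Q - 2 * T + real k - 1"
      using step_props(2)[OF s j] True by (simp_all add: D_def y_def T_def Q_def)
    show ?thesis using True by (simp add: V_def A0_def h)
  next
    case False
    have h: "Tr (batch_step n k s j) = T + 1" "Qr (batch_step n k s j) = Q + 2 * y j + 1"
      using step_props(3)[OF s j] False by (simp_all add: D_def y_def T_def Q_def)
    show ?thesis by (subst if_not_P[OF False]) (simp add: V_def B_def h algebra_simps)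
  qed
  have sy: "(\<Sum>j<n. y j) = T" using sum_y(1)[OF s] by (simp add: y_def T_def)
  have sz: "(\<Sum>j<n. (if y j = 0 then 1 else 0)) = real n - Nz s" using sum_y(2)[OF s] by (simp add: y_def)
  have "(\<Sum>j<n. V (batch_step n k s j)) = (\<Sum>j<n. (if D \<and> y j = 0 then A0 else B)) + 2 * aa * T"
    by (simp add: each sum.distrib sum_distrib_left[symmetric] sy)
  also have "(\<Sum>j<n. (if D \<and> y j = 0 then A0 else B)) = real n * B + (if D then (A0 - B) * (real n - Nz s) else 0)"
  proof (cases D)
    case True
    have "(\<Sum>j<n. (if D \<and> y j = 0 then A0 else B)) = (\<Sum>j<n. B + (A0 - B) * (if y j = 0 then 1 else 0))"
      by (rule sum.cong) (auto simp: True)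
    also have "\<dots> = real n * B + (A0 - B) * (real n - Nz s)"
      by (simp add: sum.distrib sum_distrib_left[symmetric] sz)
    finally show ?thesis using True by simp
  next
    case False
    then show ?thesis by simp
  qed
  finally have eq: "(\<Sum>j<n. V (batch_step n k s j)) = real n * B + (if D then (A0 - B) * (real n - Nz s) else 0) + 2 * aa * T" .
  have nk: "real n - real k \<ge> 1" using kn by simp
  have k1: "real k \<ge> 2" using k2 by simp
  have m1: "(real n - real k + 1) * T \<ge> T" using nk T0 by (simp add: mult_right_mono[of 1 _ T, simplified])
  have m2: "((real n - real k) * (real n - real k + 1)) * T \<ge> T"
  proof -
    have "(real n - real k) * (real n - real k + 1) \<ge> 1 * 1" using nk by (intro mult_mono) auto
    then show ?thesis using T0 by (simp add: mult_right_mono[of 1 _ T, simplified])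
  qed
  have c1: "(real k - 1) * (real n - real k + 2) \<ge> 0" using nk k1 by simp
  have aa0: "aa \<ge> 0" using k1 by (simp add: aa_def)
  have CC1: "real n * aa \<le> CC"
  proof -
    have "aa * real n \<le> aa * ((real k - 1) * (real n - real k + 2) + real n)"
      by (rule mult_left_mono) (use c1 aa0 in auto)
    then show ?thesis by (simp add: CC_def mult.commute)
  qed
  have CC2: "aa * ((real k - 1) * (real n - real k + 2)) \<le> CC"
  proof -
    have "aa * ((real k - 1) * (real n - real k + 2)) \<le> aa * ((real k - 1) * (real n - real k + 2) + real n)"
      by (rule mult_left_mono) (use aa0 in auto)
    then show ?thesis by (simp add: CC_def)
  qed
  show ?thesis
  proof (cases D)
    case True
    have Nzs: "Nz s = real k - 1" using True by (simp add: D_def)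
    define p1 where "p1 = ((real n - real k) * (real n - real k + 1)) * T"
    define p2 where "p2 = (real n - real k + 1) * (real k - 1)^2"
    define p3 where "p3 = aa * ((real k - 1) * (real n - real k + 2))"
    define X where "X = real n * B + (A0 - B) * (real n - Nz s) + 2 * aa * T"
    have id: "X - real n * V s = p3 - 2 * (real k - 1) - 2 * p2 - 2 * p1"
      unfolding X_def p1_def p2_def p3_def Nzs B_def A0_def V_def T_def Q_def aa_def
      by (simp add: power2_eq_square algebra_simps)
    have p2: "p2 \<ge> 0" using nk by (simp add: p2_def)
    have e2: "(\<Sum>j<n. V (batch_step n k s j)) = X" using eq True by (simp add: X_def)
    have tt: "Tr s = T" by (simp add: T_def)
    show ?thesis using id p2 e2 tt m2 CC2 k1 unfolding p1_def[symmetric] p3_def[symmetric] by (smt (verit))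
  next
    case False
    define p1 where "p1 = (real n - real k + 1) * T"
    define X where "X = real n * B + 2 * aa * T"
    define p4 where "p4 = real n * aa"
    have id: "X - real n * V s = p4 - 2 * real n - 2 * p1"
      unfolding X_def p1_def p4_def B_def V_def T_def Q_def aa_def
      by (simp add: power2_eq_square algebra_simps)
    have e2: "(\<Sum>j<n. V (batch_step n k s j)) = X" using eq False by (simp add: X_def)
    have tt: "Tr s = T" by (simp add: T_def)
    have n0: "real n \<ge> 0" by simp
    show ?thesis using id e2 tt m1 CC1 k1 n0 unfolding p1_def[symmetric] p4_def[symmetric] by (smt (verit))
  qed
qed

lemma V_nonneg: assumes "s \<in> batch_states k" shows "V s \<ge> 0"
proof -
  have ls: "real (length s) = real k - 1" using assms k2 by (simp add: batch_states_def)
  have cs: "Tr s ^ 2 \<le> (real k - 1) * Qr s" using CS[of s] ls by simp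
  have q0: "Qr s \<ge> 0" by (rule Qr_ge)
  have "(2 * (real k - 1)) * Qr s \<le> aa * Qr s"
    by (rule mult_right_mono) (use kn q0 in \<open>auto simp: aa_def\<close>)
  then have "2 * ((real k - 1) * Qr s) \<le> aa * Qr s" by (simp only: mult.assoc)
  then show ?thesis using cs unfolding V_def by linarith
qed

end



lemma Tr_nat: "Tr xs = real (sum_list xs)"
  by (induction xs) (auto simp: Tr_def)

context bm begin

definition c :: "nat list \<Rightarrow> nat list \<Rightarrow> real" where
  "c s s' = real (card {j. j < n \<and> batch_step n k s j = s'})"

definition U :: "nat \<Rightarrow> nat list set" where
  "U M = {s \<in> batch_states k. Tr s \<le> real M}"

definition s0 :: "nat list" where "s0 = replicate (k - 1) 0"

primrec nu :: "nat \<Rightarrow> nat list \<Rightarrow> real" where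
  "nu 0 s = (if s = s0 then 1 else 0)"
| "nu (Suc t) s' = (\<Sum>s\<in>U t. nu t s * c s s') / real n"

lemma fin_U: "finite (U M)"
proof -
  have "U M \<subseteq> {xs. set xs \<subseteq> {..M} \<and> length xs = k - 1}"
  proof
    fix xs assume "xs \<in> U M"
    then have "xs \<in> batch_states k" "sum_list xs \<le> M" by (auto simp: U_def Tr_nat)
    then show "xs \<in> {xs. set xs \<subseteq> {..M} \<and> length xs = k - 1}"
      using member_le_sum_list[of _ xs] by (force simp: batch_states_def)
  qed
  moreover have "finite {xs. set xs \<subseteq> {..M} \<and> length xs = k - 1}"
    by (rule finite_lists_length_eq) simp
  ultimately show ?thesis by (rule finite_subset)
qed

lemma U_mono: "M \<le> M' \<Longrightarrow> U M \<subseteq> U M'"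
  by (auto simp: U_def)

lemma U_S: "U M \<subseteq> batch_states k"
  by (auto simp: U_def)

lemma s0_U: "s0 \<in> U 0"
  by (simp add: U_def s0_def batch_states_def Tr_nat sorted_wrt_iff_nth_less sum_list_replicate)

lemma step_Tr: assumes "s \<in> batch_states k" "j < n"
  shows "Tr (batch_step n k s j) \<le> Tr s + 1" "Tr s \<le> Tr (batch_step n k s j) + real k"
  using step_props(2,3)[OF assms] k2 by (cases "Nz s = real k - 1 \<and> real (ys_of s ! j) = 0"; simp)+

lemma step_U: "s \<in> U t \<Longrightarrow> j < n \<Longrightarrow> batch_step n k s j \<in> U (Suc t)"
  using step_props(1)[of s j] step_Tr(1)[of s j] by (auto simp: U_def)

lemma c_nonneg: "c s s' \<ge> 0" by (simp add: c_def)

lemma c_nz: "c s s' \<noteq> 0 \<Longrightarrow> \<exists>j<n. batch_step n k s j = s'"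
  by (auto simp: c_def card_eq_0_iff)

lemma nu_nonneg: "nu t s \<ge> 0"
  by (induction t arbitrary: s) (auto intro!: sum_nonneg divide_nonneg_nonneg mult_nonneg_nonneg c_nonneg)

lemma nu_supp: "nu t s \<noteq> 0 \<Longrightarrow> s \<in> U t"
proof (induction t arbitrary: s)
  case 0 then show ?case using s0_U by (auto split: if_splits)
next
  case (Suc t)
  then have "(\<Sum>s'\<in>U t. nu t s' * c s' s) \<noteq> 0" by auto
  then obtain s' where s': "s' \<in> U t" "nu t s' * c s' s \<noteq> 0" by (meson sum.neutral)
  then obtain j where "j < n" "batch_step n k s' j = s" using c_nz by auto
  then show ?case using step_U[OF s'(1)] by auto
qed

lemma fib:
  fixes g :: "nat \<Rightarrow> nat list" and f :: "nat list \<Rightarrow> real"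
  assumes A: "finite A" and g: "\<And>j. j < n \<Longrightarrow> g j \<in> A"
  shows "(\<Sum>a\<in>A. real (card {j. j < n \<and> g j = a}) * f a) = (\<Sum>j<n. f (g j))"
proof -
  have "(\<Sum>j<n. f (g j)) = (\<Sum>a\<in>A. \<Sum>j\<in>{j. j \<in> {..<n} \<and> g j = a}. f (g j))"
    by (rule sum.group[symmetric]) (use A g in auto)
  also have "\<dots> = (\<Sum>a\<in>A. real (card {j. j < n \<and> g j = a}) * f a)"
    by (rule sum.cong) auto
  finally show ?thesis by simp
qed

definition E :: "nat \<Rightarrow> (nat list \<Rightarrow> real) \<Rightarrow> real" where
  "E t f = (\<Sum>s\<in>U t. nu t s * f s)"

lemma E_big: assumes "t \<le> M" shows "(\<Sum>s\<in>U M. nu t s * f s) = E t f"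
  unfolding E_def
  by (rule sum.mono_neutral_right) (use fin_U U_mono[OF assms] nu_supp in auto)

lemma E_Suc: "E (Suc t) f = (\<Sum>s\<in>U t. nu t s * (\<Sum>j<n. f (batch_step n k s j))) / real n"
proof -
  have "E (Suc t) f = (\<Sum>s'\<in>U (Suc t). (\<Sum>s\<in>U t. nu t s * c s s' * f s')) / real n"
    unfolding E_def by (simp add: sum_divide_distrib sum_distrib_right)
  also have "(\<Sum>s'\<in>U (Suc t). (\<Sum>s\<in>U t. nu t s * c s s' * f s')) = (\<Sum>s\<in>U t. nu t s * (\<Sum>s'\<in>U (Suc t). c s s' * f s'))"
    by (subst sum.swap) (simp add: sum_distrib_left mult.assoc)
  also have "\<dots> = (\<Sum>s\<in>U t. nu t s * (\<Sum>j<n. f (batch_step n k s j)))"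
    by (rule sum.cong[OF refl]) (simp add: c_def fib[OF fin_U step_U])
  finally show ?thesis .
qed

lemma E_one: "E t (\<lambda>_. 1) = 1"
proof (induction t)
  case 0 show ?case using s0_U by (simp add: E_def sum.delta[OF fin_U])
next
  case (Suc t)
  have n0: "real n > 0" using kn by simp
  have "E (Suc t) (\<lambda>_. 1) = (\<Sum>s\<in>U t. nu t s * (\<Sum>j<n. 1)) / real n" by (rule E_Suc)
  also have "\<dots> = (\<Sum>s\<in>U t. nu t s)" using n0 by (simp add: sum_distrib_right[symmetric])
  also have "\<dots> = 1" using Suc by (simp add: E_def)
  finally show ?case .
qed

lemma E_V: "E (Suc t) V \<le> E t V - 2 / real n * E t Tr + CC / real n"
proof -
  have n0: "real n > 0" using kn by simp
  have "(\<Sum>s\<in>U t. nu t s * (\<Sum>j<n. V (batch_step n k s j))) \<le> (\<Sum>s\<in>U t. nu t s * (real n * V s - 2 * Tr s + CC))"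
    by (rule sum_mono, rule mult_left_mono) (use drift U_S nu_nonneg in auto)
  also have "\<dots> = real n * E t V - 2 * E t Tr + CC * E t (\<lambda>_. 1)"
    by (simp add: E_def algebra_simps sum.distrib sum_subtractf sum_distrib_left sum_distrib_right)
  finally have "real n * E (Suc t) V \<le> real n * E t V - 2 * E t Tr + CC"
    using n0 by (simp add: E_Suc E_one)
  then show ?thesis using n0 by (simp add: field_simps)
qed

lemma E_V_nonneg: "E t V \<ge> 0"
  unfolding E_def
proof (rule sum_nonneg, rule mult_nonneg_nonneg)
  fix x assume "x \<in> U t"
  then show "0 \<le> V x" using V_nonneg U_S by blast
qed (rule nu_nonneg)

lemma V_s0: "V s0 = 0" by (simp add: V_def Qr_def Tr_nat s0_def sum_list_replicate)

lemma tele: "E N V + 2 / real n * (\<Sum>t<N. E t Tr) \<le> real N * CC / real n"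
proof (induction N)
  case 0
  have "(\<Sum>s\<in>U 0. nu 0 s * V s) = (\<Sum>s\<in>U 0. if s = s0 then V s else 0)"
    by (rule sum.cong) auto
  then show ?case using s0_U by (simp add: E_def V_s0 sum.delta[OF fin_U])
next
  case (Suc N)
  then show ?case using E_V[of N] by (simp add: algebra_simps add_divide_distrib)
qed

lemma sum_E_Tr: "(\<Sum>t<N. E t Tr) \<le> real N * CC / 2"
proof -
  have n0: "real n > 0" using kn by simp
  have "2 / real n * (\<Sum>t<N. E t Tr) \<le> real N * CC / real n" using tele[of N] E_V_nonneg[of N] by linarith
  then show ?thesis using n0 by (simp add: field_simps)
qed

lemma nu_sum_le: "finite A \<Longrightarrow> (\<Sum>s\<in>A. nu t s) \<le> 1"
proof -
  assume A: "finite A"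
  have "(\<Sum>s\<in>A. nu t s) = (\<Sum>s\<in>A \<inter> U t. nu t s)"
    by (rule sum.mono_neutral_right) (use A nu_supp in auto)
  also have "\<dots> \<le> (\<Sum>s\<in>U t. nu t s)"
    by (rule sum_mono2) (use fin_U nu_nonneg in auto)
  also have "\<dots> = 1" using E_one[of t] by (simp add: E_def)
  finally show ?thesis .
qed

definition KK :: nat where "KK = nat (ceiling CC) + 1"

lemma KK: "real KK \<ge> CC" "real KK \<ge> 1"
  unfolding KK_def using real_nat_ceiling_ge[of CC] by simp_all

lemma nu_F: "(\<Sum>s\<in>U KK. nu t s) \<ge> 1 - E t Tr / real KK"
proof -
  have K0: "real KK > 0" using KK by simp
  have part: "(\<Sum>s\<in>U t. nu t s) = (\<Sum>s\<in>U t \<inter> U KK. nu t s) + (\<Sum>s\<in>U t - U KK. nu t s)"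
    by (metis fin_U sum.Int_Diff)
  have a: "(\<Sum>s\<in>U t \<inter> U KK. nu t s) \<le> (\<Sum>s\<in>U KK. nu t s)"
    by (rule sum_mono2) (use fin_U nu_nonneg in auto)
  have "real KK * (\<Sum>s\<in>U t - U KK. nu t s) = (\<Sum>s\<in>U t - U KK. nu t s * real KK)"
    by (simp add: sum_distrib_left mult.commute)
  also have "\<dots> \<le> (\<Sum>s\<in>U t - U KK. nu t s * Tr s)"
    by (rule sum_mono, rule mult_left_mono) (use nu_nonneg in \<open>auto simp: U_def\<close>)
  also have "\<dots> \<le> (\<Sum>s\<in>U t. nu t s * Tr s)"
    by (rule sum_mono2) (use fin_U nu_nonneg Tr_ge in \<open>auto intro!: mult_nonneg_nonneg\<close>)
  finally have b: "(\<Sum>s\<in>U t - U KK. nu t s) \<le> E t Tr / real KK"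
    using K0 by (simp add: E_def field_simps)
  have "(\<Sum>s\<in>U t. nu t s) = 1" using E_one[of t] by (simp add: E_def)
  then show ?thesis using part a b by linarith
qed

end



lemma cpt: "compact (PiE UNIV (\<lambda>_::nat list. {0..1::real}))"
proof -
  have "compactin (product_topology (\<lambda>_. euclidean) UNIV) (PiE UNIV (\<lambda>_::nat list. {0..1::real}))"
    by (subst compactin_PiE) auto
  thus ?thesis by (simp add: euclidean_product_topology)
qed

lemma extract_sub:
  fixes f :: "nat \<Rightarrow> nat list \<Rightarrow> real"
  assumes "\<And>N s. f N s \<in> {0..1}"
  shows "\<exists>l r. strict_mono r \<and> (\<forall>s. ((\<lambda>N. f (r N) s) \<longlonglongrightarrow> l s)) \<and> (\<forall>s. l s \<in> {0..1})"
proof -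
  have sc: "seq_compact (PiE UNIV (\<lambda>_::nat list. {0..1::real}))" using cpt compact_imp_seq_compact by blast
  have "\<forall>N. f N \<in> PiE UNIV (\<lambda>_::nat list. {0..1::real})" using assms by auto
  then obtain l r where l: "l \<in> PiE UNIV (\<lambda>_::nat list. {0..1::real})" "strict_mono r" "(f \<circ> r) \<longlonglongrightarrow> l"
    using sc unfolding seq_compact_def by blast
  have "(\<lambda>N. f (r N) s) \<longlonglongrightarrow> l s" for s
    using continuous_on_tendsto_compose[OF continuous_on_product_coordinates[of s] l(3)] by (simp add: o_def)
  moreover have "\<forall>s. l s \<in> {0..1}" using l(1) by (auto simp: PiE_iff)
  ultimately show ?thesis using l(2) by blast
qed

lemma lin1: "(X::real) \<le> Y \<Longrightarrow> Y \<le> a / 2 \<Longrightarrow> a / 2 \<le> a - X"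
  by linarith

lemma alg1: "(nn::real) * (A + b - z) / d = nn * (A / d) + nn * (b - z) / d"
  by (simp add: field_simps add_divide_distrib diff_divide_distrib)

context bm begin

definition mu :: "nat \<Rightarrow> nat list \<Rightarrow> real" where
  "mu N s = (\<Sum>t<Suc N. nu t s) / real (Suc N)"

lemma mu_nonneg: "mu N s \<ge> 0"
  unfolding mu_def by (intro divide_nonneg_nonneg sum_nonneg nu_nonneg) auto

lemma mu_sum_le: assumes "finite A" shows "(\<Sum>s\<in>A. mu N s) \<le> 1"
proof -
  have "(\<Sum>s\<in>A. mu N s) = (\<Sum>t<Suc N. \<Sum>s\<in>A. nu t s) / real (Suc N)"
    unfolding mu_def by (simp add: sum_divide_distrib[symmetric] sum.swap[of _ A])
  also have "(\<Sum>t<Suc N. \<Sum>s\<in>A. nu t s) \<le> (\<Sum>t<Suc N. 1)"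
    by (rule sum_mono) (rule nu_sum_le[OF assms])
  finally show ?thesis by (simp add: divide_right_mono)
qed

lemma nu_le1: "nu t s \<le> 1" using nu_sum_le[of "{s}" t] by simp

lemma mu_le1: "mu N s \<le> 1" using mu_sum_le[of "{s}" N] by simp

lemma nu_notS: "s \<notin> batch_states k \<Longrightarrow> nu t s = 0"
  using nu_supp U_S by blast

lemma mu_notS: "s \<notin> batch_states k \<Longrightarrow> mu N s = 0"
  unfolding mu_def by (simp add: nu_notS)

lemma mu_F: "(\<Sum>s\<in>U KK. mu N s) \<ge> 1 / 2"
proof -
  have K0: "real KK > 0" using KK by simp
  have eq: "(\<Sum>s\<in>U KK. mu N s) = (\<Sum>t<Suc N. \<Sum>s\<in>U KK. nu t s) / real (Suc N)"
    unfolding mu_def by (simp add: sum_divide_distrib[symmetric] sum.swap[of _ "U KK"])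
  have ge: "(\<Sum>t<Suc N. \<Sum>s\<in>U KK. nu t s) \<ge> (\<Sum>t<Suc N. 1 - E t Tr / real KK)"
    by (rule sum_mono) (rule nu_F)
  have eq2: "(\<Sum>t<Suc N. 1 - E t Tr / real KK) = real (Suc N) - (\<Sum>t<Suc N. E t Tr) / real KK"
    by (simp only: sum_subtractf sum_divide_distrib[symmetric] sum_constant card_lessThan) simp
  have b: "(\<Sum>t<Suc N. E t Tr) / real KK \<le> (real (Suc N) * CC / 2) / real KK"
    by (rule divide_right_mono) (use sum_E_Tr[of "Suc N"] K0 in auto)
  have c0: "real (Suc N) * CC \<le> real (Suc N) * real KK"
    by (rule mult_left_mono) (use KK in auto)
  have c1: "(real (Suc N) * CC / 2) / real KK \<le> (real (Suc N) * real KK / 2) / real KK"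
    by (rule divide_right_mono) (use c0 K0 in auto)
  have c: "(real (Suc N) * CC / 2) / real KK \<le> real (Suc N) / 2"
    using c1 K0 by simp
  have "real (Suc N) / 2 \<le> real (Suc N) - (\<Sum>t<Suc N. E t Tr) / real KK" by (rule lin1[OF b c])
  also have "\<dots> = (\<Sum>t<Suc N. 1 - E t Tr / real KK)" using eq2 by simp
  also have "\<dots> \<le> (\<Sum>t<Suc N. \<Sum>s\<in>U KK. nu t s)" using ge .
  finally have "(\<Sum>t<Suc N. \<Sum>s\<in>U KK. nu t s) \<ge> real (Suc N) / 2" .
  then show ?thesis unfolding eq by (simp add: field_simps del: sum.lessThan_Suc of_nat_Suc)
qed

definition P :: "nat list \<Rightarrow> nat list set" where
  "P s' = U (sum_list s' + k)"

lemma pred_P: assumes "s \<in> batch_states k" "c s s' \<noteq> 0" shows "s \<in> P s'"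
proof -
  obtain j where j: "j < n" "batch_step n k s j = s'" using c_nz[OF assms(2)] by auto
  have "Tr s \<le> Tr s' + real k" using step_Tr(2)[OF assms(1) j(1)] j(2) by simp
  then show ?thesis using assms(1) by (simp add: P_def U_def Tr_nat)
qed

lemma self_P: "s' \<in> batch_states k \<Longrightarrow> s' \<in> P s'"
  by (simp add: P_def U_def Tr_nat)

lemma nu_inv: "(\<Sum>s\<in>P s'. nu t s * c s s') = real n * nu (Suc t) s'"
proof -
  have n0: "real n > 0" using kn by simp
  have "(\<Sum>s\<in>P s'. nu t s * c s s') = (\<Sum>s\<in>P s' \<inter> U t. nu t s * c s s')"
    by (rule sum.mono_neutral_right) (use fin_U nu_supp in \<open>auto simp: P_def\<close>)
  also have "\<dots> = (\<Sum>s\<in>U t. nu t s * c s s')"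
  proof (rule sum.mono_neutral_left)
    show "finite (U t)" by (rule fin_U)
    show "P s' \<inter> U t \<subseteq> U t" by auto
    show "\<forall>i\<in>U t - P s' \<inter> U t. nu t i * c i s' = 0"
    proof
      fix i assume i: "i \<in> U t - P s' \<inter> U t"
      then have "i \<in> batch_states k" using U_S by blast
      then have "c i s' = 0" using pred_P i by blast
      then show "nu t i * c i s' = 0" by simp
    qed
  qed
  finally show ?thesis using n0 by simp
qed

lemma mu_inv: "(\<Sum>s\<in>P s'. mu N s * c s s') = real n * mu N s' + real n * (nu (Suc N) s' - nu 0 s') / real (Suc N)"
proof -
  have "(\<Sum>s\<in>P s'. mu N s * c s s') = (\<Sum>s\<in>P s'. \<Sum>t<Suc N. nu t s * c s s') / real (Suc N)"
    unfolding mu_def by (simp add: sum_divide_distrib[symmetric] sum_distrib_right del: sum.lessThan_Suc)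
  also have "\<dots> = (\<Sum>t<Suc N. \<Sum>s\<in>P s'. nu t s * c s s') / real (Suc N)"
    by (subst sum.swap) (rule refl)
  also have "\<dots> = real n * (\<Sum>t<Suc N. nu (Suc t) s') / real (Suc N)"
    by (simp only: nu_inv sum_distrib_left)
  also have "(\<Sum>t<Suc N. nu (Suc t) s') = (\<Sum>t<Suc N. nu t s') + nu (Suc N) s' - nu 0 s'"
    using sum.lessThan_Suc_shift[of "\<lambda>t. nu t s'" "Suc N"] by simp
  finally have L: "(\<Sum>s\<in>P s'. mu N s * c s s') = real n * ((\<Sum>t<Suc N. nu t s') + nu (Suc N) s' - nu 0 s') / real (Suc N)" .
  have R: "real n * mu N s' + real n * (nu (Suc N) s' - nu 0 s') / real (Suc N) = real n * ((\<Sum>t<Suc N. nu t s') + nu (Suc N) s' - nu 0 s') / real (Suc N)"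
    unfolding mu_def by (rule alg1[symmetric])
  show ?thesis by (rule trans[OF L R[symmetric]])
qed

end



context bm begin

lemma exists_inv: "\<exists>p. ctmc_invariant_prob (batch_states k) (batch_generator n k lam) p"
proof -
  have "\<And>N s. mu N s \<in> {0..1}" using mu_nonneg mu_le1 by auto
  then obtain l r where r: "strict_mono r" and lim: "\<And>s. (\<lambda>N. mu (r N) s) \<longlonglongrightarrow> l s"
    and l01: "\<And>s. l s \<in> {0..1}"
    using extract_sub[of mu] by blast
  have l0: "l s \<ge> 0" for s using l01[of s] by simp
  have L2: "(\<Sum>s\<in>A. l s) \<le> 1" if A: "finite A" for A
  proof -
    have "(\<lambda>N. \<Sum>s\<in>A. mu (r N) s) \<longlonglongrightarrow> (\<Sum>s\<in>A. l s)"
      by (rule tendsto_sum) (rule lim)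
    then show ?thesis by (rule LIMSEQ_le_const2) (use mu_sum_le[OF A] in auto)
  qed
  have L3: "(\<Sum>s\<in>U KK. l s) \<ge> 1 / 2"
  proof -
    have "(\<lambda>N. \<Sum>s\<in>U KK. mu (r N) s) \<longlonglongrightarrow> (\<Sum>s\<in>U KK. l s)"
      by (rule tendsto_sum) (rule lim)
    then show ?thesis by (rule LIMSEQ_le_const) (use mu_F in auto)
  qed
  have L5: "l s = 0" if "s \<notin> batch_states k" for s
  proof -
    have "(\<lambda>N. mu (r N) s) \<longlonglongrightarrow> 0" using mu_notS[OF that] by simp
    then show ?thesis using lim[of s] LIMSEQ_unique by blast
  qed
  have L4: "(\<Sum>s\<in>P s'. l s * c s s') = real n * l s'" for s'
  proof -
    define g where "g N = (\<Sum>s\<in>P s'. mu (r N) s * c s s') - real n * mu (r N) s'" for N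
    have g1: "g \<longlonglongrightarrow> (\<Sum>s\<in>P s'. l s * c s s') - real n * l s'"
      unfolding g_def by (intro tendsto_intros lim)
    have g2: "g N = real n * (nu (Suc (r N)) s' - nu 0 s') / real (Suc (r N))" for N
      unfolding g_def mu_inv by simp
    have bnd: "norm (g N) \<le> real n * inverse (real (Suc N))" for N
    proof -
      have rN: "N \<le> r N" using seq_suble[OF r] by simp
      have a: "\<bar>nu (Suc (r N)) s' - nu 0 s'\<bar> \<le> 1"
        using nu_nonneg[of "Suc (r N)" s'] nu_le1[of "Suc (r N)" s'] nu_nonneg[of 0 s'] nu_le1[of 0 s'] by linarith
      have "norm (g N) = real n * \<bar>nu (Suc (r N)) s' - nu 0 s'\<bar> / real (Suc (r N))"
        by (simp add: g2 abs_mult)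
      also have "\<dots> \<le> real n * 1 / real (Suc (r N))"
        by (intro divide_right_mono mult_left_mono a) auto
      also have "\<dots> \<le> real n / real (Suc N)"
        using rN by (simp add: frac_le)
      finally show ?thesis by (simp add: field_simps)
    qed
    have "(\<lambda>N. real n * inverse (real (Suc N))) \<longlonglongrightarrow> real n * 0"
      by (intro tendsto_intros LIMSEQ_inverse_real_of_nat)
    then have "g \<longlonglongrightarrow> 0"
      by (intro Lim_null_comparison[of g "\<lambda>N. real n * inverse (real (Suc N))"]) (use bnd in auto)
    then have "(\<Sum>s\<in>P s'. l s * c s s') - real n * l s' = 0" using g1 LIMSEQ_unique by blast
    then show ?thesis by simp
  qed
  define S where "S = batch_states k"
  have summ: "l summable_on S"
  proof (rule nonneg_bdd_above_summable_on)
    show "\<And>x. x \<in> S \<Longrightarrow> 0 \<le> l x" using l0 by auto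
    show "bdd_above (sum l ` {F. F \<subseteq> S \<and> finite F})"
      by (rule bdd_aboveI[of _ 1]) (use L2 in auto)
  qed
  define Z where "Z = infsum l S"
  have "(\<Sum>s\<in>U KK. l s) \<le> Z"
    unfolding Z_def by (rule finite_sum_le_infsum[OF summ fin_U]) (use U_S l0 in \<open>auto simp: S_def\<close>)
  then have Z0: "Z > 0" using L3 by linarith
  define p where "p s = inverse Z * l s" for s
  have hs: "(l has_sum Z) S" unfolding Z_def using summ by simp
  have p1: "(p has_sum 1) S"
    using has_sum_cmult_right[OF hs, of "inverse Z"] Z0 by (simp add: p_def[abs_def])
  have p3: "((\<lambda>s. p s * batch_generator n k lam s s') has_sum 0) S" if s': "s' \<in> S" for s'
  proof -
    define f where "f s = p s * batch_generator n k lam s s'" for s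
    have fe: "f s = p s * (lam * c s s' - (if s = s' then real n * lam else 0))" for s
      by (simp add: f_def batch_generator_def c_def)
    have PS: "P s' \<subseteq> S" using U_S by (auto simp: P_def S_def)
    have sP: "s' \<in> P s'" using self_P s' by (simp add: S_def)
    have "(f has_sum 0) S \<longleftrightarrow> (f has_sum 0) (P s')"
    proof (rule has_sum_cong_neutral)
      show "\<And>x. x \<in> P s' - S \<Longrightarrow> f x = 0" using PS by auto
      show "\<And>x. x \<in> S - P s' \<Longrightarrow> f x = 0"
      proof -
        fix x assume x: "x \<in> S - P s'"
        then have "c x s' = 0" using pred_P by (auto simp: S_def)
        moreover have "x \<noteq> s'" using x sP by auto
        ultimately show "f x = 0" by (simp add: fe)
      qed
      show "\<And>x. x \<in> S \<inter> P s' \<Longrightarrow> f x = f x" by simp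
    qed
    moreover have "(f has_sum 0) (P s')"
    proof (rule has_sum_finiteI)
      show "finite (P s')" by (simp add: P_def fin_U)
      have "sum f (P s') = (\<Sum>s\<in>P s'. inverse Z * lam * (l s * c s s')) - (\<Sum>s\<in>P s'. if s = s' then inverse Z * lam * real n * l s else 0)"
        by (simp add: fe p_def sum_subtractf[symmetric] algebra_simps if_distrib cong: if_cong)
      also have "\<dots> = inverse Z * lam * (\<Sum>s\<in>P s'. l s * c s s') - inverse Z * lam * real n * l s'"
        using sP by (simp add: sum_distrib_left[symmetric] sum.delta[OF \<open>finite (P s')\<close>])
      also have "\<dots> = 0" by (simp add: L4)
      finally show "0 = sum f (P s')" by simp
    qed
    ultimately have "(f has_sum 0) S" by simp
    moreover have fd: "f = (\<lambda>s. p s * batch_generator n k lam s s')" by (rule ext) (simp add: f_def)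
    ultimately show ?thesis by simp
  qed
  have "ctmc_invariant_prob S (batch_generator n k lam) p"
    unfolding ctmc_invariant_prob_def using p1 p3 Z0 l0 by (auto simp: p_def)
  then show ?thesis unfolding S_def by blast
qed

end


theorem theorem2:
  fixes n k :: nat and lam :: real
  assumes "2 \<le> k" and "k < n" and "lam > 0"
  shows "batch_mix_stable n k lam"
proof -
  interpret bm n k using assms by unfold_locales
  show ?thesis unfolding batch_mix_stable_def by (rule exists_inv)
qed

end
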